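(* Consider the closed-loop system $\Sigma$ described in the context, with Assumptions (A1)–(A4) holding, and with $\eta(s):=\frac{1}{\sqrt m}\rho_1^{-1}\!\big(r\frac{\sigma}{2}\alpha_3(s)\big)$ for some $r\in[0,1)$. Then for any trajectory of $\Sigma$ there exist constants $\beta_1,\beta_2>0$ (depending on the initial state) such that $\|u(t)\|\le\beta_1$ and $\|\dot u(t)\|\le\beta_2$ for all $t\in[t_k,\min\{t_{k+1},t_k+T\})$ and all $k\in\mathbb{N}_0$.
   Context: Plant: $\dot x(t)=f(x(t),u(t),d(t))$ for $t\ge t_0=0$, with $x\in\mathbb{R}^n$, $u\in\mathbb{R}^m$, $d\in\mathbb{R}^q$. Standing assumptions: (A1) there exist $\gamma:\mathbb{R}^n\to\mathbb{R}^m$, a continuously differentiable $V:\mathbb{R}^n\to\mathbb{R}$ and class $\mathcal{K}_\infty$ functions $\alpha_1,\alpha_2,\alpha_3,\rho_1,\rho_2$ with $\alpha_1(\|x\|)\le V(x)\le\alpha_2(\|x\|)$ and $\frac{\partial V}{\partial x}f(x,\gamma(x)+e,d)\le-\alpha_3(\|x\|)+\rho_1(\|e\|)+\rho_2(\|d\|)$ for all $x\in\mathbb{R}^n,e\in\mathbb{R}^m,d\in\mathbb{R}^q$; (A2) $f$ and $\gamma$ are Lipschitz on compact sets, $f(0)=0$, $\gamma(0)=0$; (A3) there is $D\ge0$ with $\|d(t)\|\le D$ for all $t\ge0$; (A4) $\Phi=\{\phi_j:[0,\infty)\to\mathbb{R}\}_{j=0}^p$ consists of continuously differentiable functions, $\phi_0$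 is a nonzero constant, and for a fixed $T>0$ the functions in $\Phi$ are linearly independent on $[0,T]$. Write $\phi(\tau)=[\phi_0(\tau),\dots,\phi_p(\tau)]^\top$ and $g(a,\tau)=a^\top\phi(\tau)$ for $a\in\mathbb{R}^{p+1}$. Control law: for event times $t_0<t_1<\dots$, $u(t_k+\tau)=a(k)^\top\phi(\tau)$ for $\tau\in[0,t_{k+1}-t_k)$, where $a(k)\in\mathbb{R}^{(p+1)\times m}$ has $i$-th column $a_i(k)$. Model: $\hat x$ solves $\dot{\hat x}=f(\hat x,\gamma(\hat x),0)$ on $[t_k,t_k+T]$ with $\hat x(t_k)=x(t_k)$, and $\hat u_i(\tau):=\gamma_i(\hat x(t_k+\tau))$ ($i$-th component). Coefficients: for each $i\in\{1,\dots,m\}$, $a_i(k)$ is the (unique) minimizer over $a\in\mathbb{R}^{p+1}$ of $\int_0^T|g(a,\tau)-\hat u_i(\tau)|^2d\tau$ subject to $|g(a,0)-\hat u_i(0)|\le\eta(\|\hat x(t_k)\|)$, with $\eta(s):=\frac{1}{\sqrt m}\rho_1^{-1}(r\frac{\sigma}{2}\alpha_3(s))$. Event-triggering rule: with $e(t):=u(t)-\gamma(x(t))$, a design parameter $\sigma\in(0,1)$ and $\epsilon:=\alpha_2\big(\alpha_3^{-1}(2\rho_2(D)/\sigma)\big)\ge0$, $t_{k+1}=\min\{t>t_k:\ \rho_1(\|e(t)\|)\ge\frac{\sigma}{2}\alpha_3(\|x(t)\|)\ \text{and}\ V(x(t))\ge\epsilon\}$. The closed-loop system $\Sigma$ is the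 combination of plant, control law, coefficient optimization and triggering rule. Notation: $\epsilon_k:=V(x(t_k))$ for $k\in\mathbb{N}_0$, and $\bar\epsilon:=\max\{\epsilon,\epsilon_0\}$. *)

theory Defs
  imports "HOL-Analysis.Analysis"
begin

definition classKinf :: "(real \<Rightarrow> real) \<Rightarrow> bool" where
  "classKinf \<alpha> \<longleftrightarrow> continuous_on {0..} \<alpha> \<and> \<alpha> 0 = 0 \<and> strict_mono_on {0..} \<alpha>
      \<and> filterlim \<alpha> at_top at_top"

definition Kinv :: "(real \<Rightarrow> real) \<Rightarrow> real \<Rightarrow> real" where
  "Kinv \<alpha> = inv_into {0..} \<alpha>"

definition lipschitz_on_compacts :: "('a::metric_space \<Rightarrow> 'b::metric_space) \<Rightarrow> bool" where
  "lipschitz_on_compacts g \<longleftrightarrow> (\<forall>K. compact K \<longrightarrow> (\<exists>L. L-lipschitz_on K g))"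

end

theory Submission
  imports Defs
begin



lemma dini_bound:
  fixes g :: "real \<Rightarrow> real"
  assumes ab: "a \<le> b" and cont: "continuous_on {a..b} g"
    and dini: "\<And>s \<delta>. s \<in> {a..<b} \<Longrightarrow> g s \<ge> c \<Longrightarrow> \<delta> > 0 \<Longrightarrow>
                 \<exists>h0>0. \<forall>h. 0 < h \<and> h \<le> h0 \<longrightarrow> g (s + h) \<le> g s + \<delta> * h"
  shows "\<forall>t\<in>{a..b}. g t \<le> max c (g a)"
proof -
  define M where "M = max c (g a)"
  have key: "g t \<le> M + \<delta> * (t - a)" if t: "t \<in> {a..b}" and \<delta>: "\<delta> > 0" for t \<delta>
  proof (rule ccontr)
    assume nt: "\<not> g t \<le> M + \<delta> * (t - a)"
    define \<psi> where "\<psi> = (\<lambda>\<tau>. g \<tau> - \<delta> * (\<tau> - a))"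
    have cpsi: "continuous_on {a..t} \<psi>" unfolding \<psi>_def
      by (intro continuous_intros continuous_on_subset[OF cont]) (use t in auto)
    define S where "S = {\<tau> \<in> {a..t}. \<psi> \<tau> \<le> M}"
    have aS: "a \<in> S" using t by (auto simp: S_def \<psi>_def M_def)
    have clS: "closed S" unfolding S_def
      by (rule continuous_on_closed_Collect_le[OF cpsi]) auto
    have bdd: "bdd_above S" unfolding S_def by (rule bdd_aboveI[of _ t]) auto
    define s0 where "s0 = Sup S"
    have s0S: "s0 \<in> S" unfolding s0_def using aS bdd clS closed_contains_Sup by blast
    have ub: "\<tau> \<le> s0" if "\<tau> \<in> S" for \<tau> unfolding s0_def using that bdd by (rule cSup_upper)
    have s0t: "s0 < t"
    proof -
      have "s0 \<le> t" using s0S by (auto simp: S_def)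
      moreover have "s0 \<noteq> t" using s0S nt by (auto simp: S_def \<psi>_def)
      ultimately show ?thesis by simp
    qed
    have s0a: "a \<le> s0" using s0S by (auto simp: S_def)
    have psis0: "\<psi> s0 \<le> M" using s0S by (auto simp: S_def)
    show False
    proof (cases "g s0 \<ge> c")
      case True
      have "s0 \<in> {a..<b}" using s0a s0t t by auto
      from dini[OF this True, of "\<delta>/2"] \<delta> obtain h0 where h0: "h0 > 0"
        "\<forall>h. 0 < h \<and> h \<le> h0 \<longrightarrow> g (s0 + h) \<le> g s0 + \<delta>/2 * h" by auto
      define h where "h = min h0 (t - s0)"
      have hp: "0 < h" "h \<le> h0" "h \<le> t - s0" using h0 s0t by (auto simp: h_def)
      have "g (s0 + h) \<le> g s0 + \<delta>/2 * h" using h0 hp by auto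
      hence "\<psi> (s0 + h) \<le> \<psi> s0 - \<delta>/2 * h" by (simp add: \<psi>_def algebra_simps)
      also have "\<dots> \<le> M" using psis0 \<delta> hp by (smt (verit) mult_pos_pos half_gt_zero)
      finally have "s0 + h \<in> S" using hp s0a by (auto simp: S_def)
      with ub hp show False by fastforce
    next
      case False
      have "s0 \<in> {a..b}" using s0a s0t t by auto
      with cont obtain e where e: "e > 0" "\<forall>\<tau>\<in>{a..b}. dist \<tau> s0 < e \<longrightarrow> dist (g \<tau>) (g s0) < c - g s0"
        unfolding continuous_on_iff using False by (metis diff_gt_0_iff_gt not_le)
      define h where "h = min (e/2) (t - s0)"
      have hp: "0 < h" "h < e" "h \<le> t - s0" using e s0t by (auto simp: h_def)
      have "s0 + h \<in> {a..b}" using hp s0a t by auto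
      with e hp have "\<bar>g (s0 + h) - g s0\<bar> < c - g s0" by (auto simp: dist_real_def)
      hence "g (s0 + h) < c" by linarith
      moreover have "\<delta> * (s0 + h - a) \<ge> 0" using \<delta> hp s0a by simp
      ultimately have "\<psi> (s0 + h) \<le> M" by (simp add: \<psi>_def M_def)
      hence "s0 + h \<in> S" using hp s0a by (auto simp: S_def)
      with ub hp show False by fastforce
    qed
  qed
  show ?thesis
  proof
    fix t assume t: "t \<in> {a..b}"
    show "g t \<le> max c (g a)"
    proof (rule ccontr)
      assume "\<not> ?thesis"
      hence gt: "g t > M" by (simp add: M_def not_le)
      have "t \<noteq> a" using gt by (auto simp: M_def)
      hence ta: "t > a" using t by auto
      define \<delta> where "\<delta> = (g t - M) / (2 * (t - a))"
      have dp: "\<delta> > 0" using gt ta by (simp add: \<delta>_def)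
      have "\<delta> * (t - a) = (g t - M) / 2" using ta by (simp add: \<delta>_def field_simps)
      with key[OF t dp] have "g t \<le> M + (g t - M) / 2" by simp
      with gt show False by (simp add: field_simps)
    qed
  qed
qed



lemma quad_lower:
  fixes \<phi> :: "real \<Rightarrow> real^'p"
  assumes T: "T > 0" and c\<phi>: "continuous_on {0..T} \<phi>"
    and ind: "\<forall>c. (\<forall>\<tau>\<in>{0..T}. c \<bullet> \<phi> \<tau> = 0) \<longrightarrow> c = 0"
  shows "\<exists>\<mu>>0. \<forall>c. \<mu> * (norm c)^2 \<le> integral {0..T} (\<lambda>\<tau>. (c \<bullet> \<phi> \<tau>)^2)"
proof -
  define q where "q = (\<lambda>c. integral {0..T} (\<lambda>\<tau>. (c \<bullet> \<phi> \<tau>)^2))"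
  have cj: "continuous_on {0..T} (\<lambda>\<tau>. \<phi> \<tau> $ j)" for j
    by (intro continuous_intros c\<phi>)
  have sq: "(c \<bullet> \<phi> \<tau>)^2 = (\<Sum>j\<in>UNIV. \<Sum>l\<in>UNIV. c$j * c$l * (\<phi> \<tau> $ j * \<phi> \<tau> $ l))" for c \<tau>
    by (simp add: inner_vec_def power2_eq_square sum_product algebra_simps)
  have qs: "q c = (\<Sum>j\<in>UNIV. \<Sum>l\<in>UNIV. c$j * c$l * integral {0..T} (\<lambda>\<tau>. \<phi> \<tau> $ j * \<phi> \<tau> $ l))" for c
  proof -
    have int: "(\<lambda>\<tau>. \<phi> \<tau> $ j * \<phi> \<tau> $ l) integrable_on {0..T}" for j l
      by (intro integrable_continuous_interval continuous_intros cj)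
    have int2: "(\<lambda>\<tau>. c$j * c$l * (\<phi> \<tau> $ j * \<phi> \<tau> $ l)) integrable_on {0..T}" for j l
      by (intro integrable_continuous_interval continuous_intros cj)
    have int3: "(\<lambda>\<tau>. \<Sum>l\<in>UNIV. c$j * c$l * (\<phi> \<tau> $ j * \<phi> \<tau> $ l)) integrable_on {0..T}" for j
      using int2 by (intro integrable_sum) auto
    show ?thesis unfolding q_def sq
      by (simp add: integral_sum int2 int3)
  qed
  have qc: "continuous_on UNIV q"
    unfolding qs by (intro continuous_intros)
  have hom: "q (a *\<^sub>R c) = a^2 * q c" for a c
    unfolding q_def by (simp add: power_mult_distrib)
  have qnn: "q c \<ge> 0" for c unfolding q_def
    by (rule integral_nonneg) (auto intro!: integrable_continuous_interval continuous_intros c\<phi>)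
  obtain j0 :: 'p where True by blast
  have ne: "sphere (0::real^'p) 1 \<noteq> {}"
    by (simp add: sphere_eq_empty)
  obtain c0 where c0: "c0 \<in> sphere 0 1" "\<forall>c\<in>sphere 0 1. q c0 \<le> q c"
    using continuous_attains_inf[OF compact_sphere ne continuous_on_subset[OF qc]] by blast
  have qpos: "q c0 > 0"
  proof (rule ccontr)
    assume "\<not> q c0 > 0"
    hence q0: "q c0 = 0" using qnn[of c0] by simp
    have "(c0 \<bullet> \<phi> \<tau>)^2 = 0" if "\<tau> \<in> {0..T}" for \<tau>
    proof (rule has_integral_0_cbox_imp_0[of 0 T "\<lambda>\<tau>. (c0 \<bullet> \<phi> \<tau>)^2"])
      show "continuous_on (cbox 0 T) (\<lambda>\<tau>. (c0 \<bullet> \<phi> \<tau>)\<^sup>2)"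
        by (auto intro!: continuous_intros c\<phi>)
      show "((\<lambda>\<tau>. (c0 \<bullet> \<phi> \<tau>)\<^sup>2) has_integral 0) (cbox 0 T)"
      proof -
        have "(\<lambda>\<tau>. (c0 \<bullet> \<phi> \<tau>)\<^sup>2) integrable_on {0..T}"
          by (auto intro!: integrable_continuous_interval continuous_intros c\<phi>)
        hence "((\<lambda>\<tau>. (c0 \<bullet> \<phi> \<tau>)\<^sup>2) has_integral q c0) {0..T}"
          unfolding q_def by (rule integrable_integral)
        thus ?thesis using q0 by simp
      qed
    qed (use that T in auto)
    hence "\<forall>\<tau>\<in>{0..T}. c0 \<bullet> \<phi> \<tau> = 0" by simp
    with ind have "c0 = 0" by blast
    with c0 show False by simp
  qed
  have main: "\<forall>c. q c0 * (norm c)^2 \<le> q c"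
  proof
    fix c :: "real^'p"
    show "q c0 * (norm c)^2 \<le> q c"
    proof (cases "c = 0")
      case True thus ?thesis by (simp add: qnn)
    next
      case False
      have "(1 / norm c) *\<^sub>R c \<in> sphere 0 1" using False by (simp add: norm_scaleR)
      hence "q c0 \<le> q ((1 / norm c) *\<^sub>R c)" using c0 by blast
      also have "\<dots> = q c / (norm c)^2" by (simp add: hom power_divide)
      finally show ?thesis using False by (simp add: field_simps)
    qed
  qed
  show ?thesis using qpos main unfolding q_def by blast
qed


lemma dini_step:
  fixes f :: "real^'n \<Rightarrow> real^'m \<Rightarrow> real^'q \<Rightarrow> real^'n"
    and V :: "real^'n \<Rightarrow> real" and DV :: "real^'n \<Rightarrow> real^'n"
    and x :: "real \<Rightarrow> real^'n" and U :: "real \<Rightarrow> real^'m" and d :: "real \<Rightarrow> real^'q"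
  assumes Vd: "(V has_derivative (\<lambda>h. DV (x s) \<bullet> h)) (at (x s))"
    and lip: "lipschitz_on_compacts (\<lambda>(z, v, w). f z v w)"
    and s0: "0 \<le> s" and h1: "0 < h1"
    and cx: "continuous_on {s..s+h1} x" and cU: "continuous_on {s..s+h1} U"
    and intg: "\<And>h. 0 \<le> h \<Longrightarrow> h \<le> h1 \<Longrightarrow>
          ((\<lambda>\<tau>. f (x \<tau>) (U \<tau>) (d \<tau>)) has_integral (x (s + h) - x s)) {s..s+h}"
    and dD: "\<forall>t\<ge>0. norm (d t) \<le> D"
    and Kb: "\<And>w. norm w \<le> D \<Longrightarrow> DV (x s) \<bullet> f (x s) (U s) w \<le> K"
    and \<delta>: "\<delta> > 0"
  shows "\<exists>h0>0. \<forall>h. 0 < h \<and> h \<le> h0 \<longrightarrow> V (x (s + h)) \<le> V (x s) + (K + \<delta>) * h"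
proof -
  define y where "y = x s"
  define g where "g = (\<lambda>\<tau>. f (x \<tau>) (U \<tau>) (d \<tau>))"
  define F where "F = (\<lambda>(z, v, w). f z v w)"
  define KK where "KK = x ` {s..s+h1} \<times> (U ` {s..s+h1} \<times> cball (0::real^'q) D)"
  have cKK: "compact KK" unfolding KK_def
    by (intro compact_Times compact_continuous_image cx cU compact_Icc compact_cball)
  obtain L0 where L0: "L0-lipschitz_on KK F" using lip cKK unfolding lipschitz_on_compacts_def F_def by blast
  define L where "L = L0"
  have L: "L-lipschitz_on KK F" "L \<ge> 0" using L0 lipschitz_on_nonneg unfolding L_def by blast+
  have "bounded (F ` KK)"
    by (intro compact_imp_bounded compact_continuous_image cKK lipschitz_on_continuous_on[OF L(1)])
  then obtain Mg0 where Mg0: "\<forall>p\<in>KK. norm (F p) \<le> Mg0" by (auto simp: bounded_iff)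
  define Mg where "Mg = max Mg0 1"
  have Mg: "Mg > 0" "\<forall>p\<in>KK. norm (F p) \<le> Mg" using Mg0 by (auto simp: Mg_def intro: order_trans)
  have inKK: "(x \<tau>, U \<tau>, d \<tau>) \<in> KK" if "\<tau> \<in> {s..s+h1}" for \<tau>
    using that dD s0 by (auto simp: KK_def)
  have inKK0: "(y, U s, d \<tau>) \<in> KK" if "\<tau> \<in> {s..s+h1}" for \<tau>
    using that dD s0 h1 by (auto simp: KK_def y_def)
  have gb: "norm (g \<tau>) \<le> Mg" if "\<tau> \<in> {s..s+h1}" for \<tau>
    using Mg(2) inKK[OF that] by (auto simp: g_def F_def)
  define A where "A = norm (DV y) * L * 2 + 1"
  have A: "A > 0" using L by (simp add: A_def add_nonneg_pos)
  define e1 where "e1 = \<delta> / (2 * Mg)"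
  define e2 where "e2 = \<delta> / (2 * A)"
  have e1: "e1 > 0" using \<delta> Mg by (simp add: e1_def)
  have e2: "e2 > 0" using \<delta> A by (simp add: e2_def)
  from Vd[unfolded has_derivative_at_alt] e1 obtain \<rho> where \<rho>: "\<rho> > 0"
    "\<forall>z. norm (z - y) < \<rho> \<longrightarrow> norm (V z - V y - DV y \<bullet> (z - y)) \<le> e1 * norm (z - y)"
    unfolding y_def by blast
  have ss: "s \<in> {s..s+h1}" using h1 by auto
  from cx ss e2 obtain dx where dx: "dx > 0" "\<forall>\<tau>\<in>{s..s+h1}. dist \<tau> s < dx \<longrightarrow> dist (x \<tau>) (x s) < e2"
    unfolding continuous_on_iff by blast
  from cU ss e2 obtain du where du: "du > 0" "\<forall>\<tau>\<in>{s..s+h1}. dist \<tau> s < du \<longrightarrow> dist (U \<tau>) (U s) < e2"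
    unfolding continuous_on_iff by blast
  define h0 where "h0 = min h1 (min (dx/2) (min (du/2) (\<rho> / (2 * Mg))))"
  have h0: "h0 > 0" using h1 dx du \<rho> Mg by (simp add: h0_def)
  show ?thesis
  proof (intro exI[of _ h0] conjI allI impI h0)
    fix h assume h: "0 < h \<and> h \<le> h0"
    have hh1: "h \<le> h1" "h < dx" "h < du" "h \<le> \<rho> / (2 * Mg)" using h dx du by (auto simp: h0_def)
    define \<Delta> where "\<Delta> = x (s + h) - x s"
    have I: "(g has_integral \<Delta>) {s..s+h}" using intg[of h] h hh1 by (simp add: g_def \<Delta>_def)
    have sub: "{s..s+h} \<subseteq> {s..s+h1}" using hh1 by auto
    have nD: "norm \<Delta> \<le> Mg * h"
      using has_integral_bound_real[OF _ _ I, of Mg "{}"] Mg gb sub h by auto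
    have "Mg * h \<le> \<rho> / 2" using hh1(4) Mg by (simp add: field_simps)
    hence nD2: "norm (x (s + h) - y) < \<rho>" using nD \<rho> by (simp add: \<Delta>_def y_def)
    have I2: "((\<lambda>\<tau>. DV y \<bullet> g \<tau>) has_integral DV y \<bullet> \<Delta>) {s..s+h}"
      using has_integral_linear[OF I bounded_linear_inner_right[of "DV y"]] by (simp add: o_def)
    have pw: "DV y \<bullet> g \<tau> \<le> K + \<delta>/2" if \<tau>: "\<tau> \<in> {s..s+h}" for \<tau>
    proof -
      have \<tau>1: "\<tau> \<in> {s..s+h1}" using \<tau> sub by auto
      have dt: "dist \<tau> s < dx" "dist \<tau> s < du" using \<tau> hh1 by (auto simp: dist_real_def)
      have ex: "norm (x \<tau> - y) < e2" using dx dt \<tau>1 by (auto simp: y_def dist_norm)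
      have eu: "norm (U \<tau> - U s) < e2" using du dt \<tau>1 by (auto simp: dist_norm)
      have "dist (x \<tau>, U \<tau>, d \<tau>) (y, U s, d \<tau>) = norm (x \<tau> - y, U \<tau> - U s, 0::real^'q)"
        by (simp add: dist_norm)
      also have "\<dots> \<le> norm (x \<tau> - y) + norm (U \<tau> - U s, 0::real^'q)" by (rule norm_Pair_le)
      also have "\<dots> \<le> norm (x \<tau> - y) + (norm (U \<tau> - U s) + norm (0::real^'q))"
        using norm_Pair_le by (intro add_left_mono) blast
      finally have dd: "dist (x \<tau>, U \<tau>, d \<tau>) (y, U s, d \<tau>) \<le> 2 * e2" using ex eu by simp
      have "norm (g \<tau> - f y (U s) (d \<tau>)) = dist (F (x \<tau>, U \<tau>, d \<tau>)) (F (y, U s, d \<tau>))"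
        by (simp add: g_def F_def dist_norm)
      also have "\<dots> \<le> L * dist (x \<tau>, U \<tau>, d \<tau>) (y, U s, d \<tau>)"
        by (rule lipschitz_onD[OF L(1) inKK[OF \<tau>1] inKK0[OF \<tau>1]])
      also have "\<dots> \<le> L * (2 * e2)" using dd L(2) by (rule mult_left_mono)
      finally have nd: "norm (g \<tau> - f y (U s) (d \<tau>)) \<le> L * (2 * e2)" .
      have "DV y \<bullet> g \<tau> = DV y \<bullet> f y (U s) (d \<tau>) + DV y \<bullet> (g \<tau> - f y (U s) (d \<tau>))"
        by (simp add: inner_diff_right)
      also have "\<dots> \<le> K + norm (DV y) * norm (g \<tau> - f y (U s) (d \<tau>))"
        using Kb[of "d \<tau>"] dD s0 \<tau> norm_cauchy_schwarz[of "DV y" "g \<tau> - f y (U s) (d \<tau>)"]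
        by (auto simp: y_def)
      also have "\<dots> \<le> K + norm (DV y) * (L * (2 * e2))"
        using nd by (intro add_left_mono mult_left_mono) auto
      also have "norm (DV y) * (L * (2 * e2)) \<le> \<delta>/2"
      proof -
        have "norm (DV y) * (L * (2 * e2)) = (A - 1) * e2" by (simp add: A_def algebra_simps)
        also have "\<dots> \<le> A * e2" using e2 by simp
        also have "\<dots> = \<delta>/2" using A by (simp add: e2_def)
        finally show ?thesis .
      qed
      finally show ?thesis by simp
    qed
    have "DV y \<bullet> \<Delta> \<le> (K + \<delta>/2) * h"
      using has_integral_le[OF I2 has_integral_const_real[of "K + \<delta>/2" s "s+h"]] pw h by (auto simp: mult.commute)
    moreover have "V (x (s + h)) - V y - DV y \<bullet> \<Delta> \<le> e1 * norm \<Delta>"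
      using \<rho>(2) nD2 unfolding \<Delta>_def y_def by (smt (verit) abs_le_iff real_norm_def)
    moreover have "e1 * norm \<Delta> \<le> \<delta>/2 * h"
    proof -
      have "e1 * norm \<Delta> \<le> e1 * (Mg * h)" using nD e1 by simp
      also have "e1 * (Mg * h) = \<delta>/2 * h" using Mg by (simp add: e1_def)
      finally show ?thesis .
    qed
    ultimately show "V (x (s + h)) \<le> V (x s) + (K + \<delta>) * h"
      by (simp add: y_def algebra_simps)
  qed
qed



lemma K_mono: assumes "classKinf \<alpha>" "0 \<le> a" "a \<le> b" shows "\<alpha> a \<le> \<alpha> b"
proof (cases "a = b")
  case False
  hence "a < b" using assms by simp
  have sm: "strict_mono_on {0..} \<alpha>" using assms(1) by (simp add: classKinf_def)
  have "\<alpha> a < \<alpha> b"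
    by (rule strict_mono_onD[OF sm]) (use assms \<open>a < b\<close> in auto)
  thus ?thesis by simp
qed simp

lemma K_nonneg: "classKinf \<alpha> \<Longrightarrow> 0 \<le> a \<Longrightarrow> 0 \<le> \<alpha> a"
  using K_mono[of \<alpha> 0 a] by (simp add: classKinf_def)

lemma K_le_rev: assumes "classKinf \<alpha>" "0 \<le> a" "0 \<le> b" "\<alpha> a \<le> \<alpha> b" shows "a \<le> b"
proof (rule ccontr)
  assume "\<not> a \<le> b" hence "b < a" by simp
  have sm: "strict_mono_on {0..} \<alpha>" using assms(1) by (simp add: classKinf_def)
  have "\<alpha> b < \<alpha> a"
    by (rule strict_mono_onD[OF sm]) (use assms \<open>b < a\<close> in auto)
  with assms(4) show False by simp
qed

lemma K_big: assumes "classKinf \<alpha>" shows "\<exists>R::real\<ge>0. \<alpha> R > E"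
proof -
  have "eventually (\<lambda>R. \<alpha> R > E) at_top"
    using assms unfolding classKinf_def filterlim_at_top_dense by blast
  then obtain N where N: "\<forall>n\<ge>N. \<alpha> n > E" unfolding eventually_at_top_linorder by blast
  show ?thesis using N by (intro exI[of _ "max N 0"]) auto
qed

lemma Kinv: assumes K: "classKinf \<alpha>" and y: "0 \<le> y"
  shows "0 \<le> Kinv \<alpha> y \<and> \<alpha> (Kinv \<alpha> y) = y"
proof -
  obtain R where R: "R \<ge> 0" "\<alpha> R > y" using K_big[OF K] by blast
  have cR: "continuous_on {0..R} \<alpha>" using K by (auto simp: classKinf_def intro: continuous_on_subset)
  have "\<exists>z\<ge>0. z \<le> R \<and> \<alpha> z = y"
    using IVT'[of \<alpha> 0 y R, OF _ _ _ cR] K R y unfolding classKinf_def by auto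
  hence "y \<in> \<alpha> ` {0..}" by auto
  hence "inv_into {0..} \<alpha> y \<in> {0..}" "\<alpha> (inv_into {0..} \<alpha> y) = y"
    by (rule inv_into_into, rule f_inv_into_f)
  thus ?thesis unfolding Kinv_def by auto
qed

lemma deriv_nonpos_dec:
  fixes g :: "real \<Rightarrow> real"
  assumes T: "0 \<le> T"
    and D: "\<And>\<tau>. \<tau> \<in> {0..T} \<Longrightarrow> (g has_derivative (\<lambda>h. h * g' \<tau>)) (at \<tau> within {0..T})"
    and N: "\<And>\<tau>. \<tau> \<in> {0..T} \<Longrightarrow> g' \<tau> \<le> 0"
  shows "\<forall>\<tau>\<in>{0..T}. g \<tau> \<le> g 0"
proof -
  have c: "continuous_on {0..T} g" using D by (rule has_derivative_continuous_on)
  have "\<forall>t\<in>{0..T}. g t \<le> max (g 0) (g 0)"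
  proof (rule dini_bound[OF T c])
    fix s \<delta> :: real assume s: "s \<in> {0..<T}" and \<delta>: "\<delta> > 0"
    from D[of s] s have "(g has_derivative (\<lambda>h. h * g' s)) (at s within {0..T})" by auto
    from this[unfolded has_derivative_within_alt] \<delta> obtain d where d: "d > 0"
      "\<forall>y\<in>{0..T}. norm (y - s) < d \<longrightarrow> norm (g y - g s - (y - s) * g' s) \<le> \<delta> * norm (y - s)" by blast
    show "\<exists>h0>0. \<forall>h. 0 < h \<and> h \<le> h0 \<longrightarrow> g (s + h) \<le> g s + \<delta> * h"
    proof (intro exI[of _ "min (d/2) (T - s)"] conjI allI impI)
      show "0 < min (d/2) (T - s)" using d s by auto
      fix h assume h: "0 < h \<and> h \<le> min (d / 2) (T - s)"
      have "s + h \<in> {0..T}" using h s by auto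
      moreover have "norm (s + h - s) < d" using h d by auto
      ultimately have "\<bar>g (s+h) - g s - (s + h - s) * g' s\<bar> \<le> \<delta> * \<bar>s + h - s\<bar>"
        using d(2) by (simp only: real_norm_def)
      hence "\<bar>g (s+h) - g s - h * g' s\<bar> \<le> \<delta> * h" using h by simp
      moreover have "h * g' s \<le> 0" using N[of s] s h by (simp add: mult_nonneg_nonpos)
      ultimately show "g (s + h) \<le> g s + \<delta> * h" by linarith
    qed
  qed
  thus ?thesis by simp
qed




theorem lemma2:
  fixes f :: "real^'n \<Rightarrow> real^'m \<Rightarrow> real^'q \<Rightarrow> real^'n"
    and \<gamma> :: "real^'n \<Rightarrow> real^'m"
    and V :: "real^'n \<Rightarrow> real" and DV :: "real^'n \<Rightarrow> real^'n"
    and \<alpha>1 \<alpha>2 \<alpha>3 \<rho>1 \<rho>2 :: "real \<Rightarrow> real"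
    and D T \<sigma> r \<epsilon> :: real
    and \<phi> d\<phi> :: "real \<Rightarrow> real^'p"
    and \<eta> :: "real \<Rightarrow> real"
    and x :: "real \<Rightarrow> real^'n" and u :: "real \<Rightarrow> real^'m" and d :: "real \<Rightarrow> real^'q"
    and tev :: "nat \<Rightarrow> ereal"
    and a :: "nat \<Rightarrow> real^'p^'m"
    and xh :: "nat \<Rightarrow> real \<Rightarrow> real^'n"
  assumes K: "classKinf \<alpha>1" "classKinf \<alpha>2" "classKinf \<alpha>3" "classKinf \<rho>1" "classKinf \<rho>2"
    and V_C1: "\<forall>z. (V has_derivative (\<lambda>h. DV z \<bullet> h)) (at z)" "continuous_on UNIV DV"
    and V_bounds: "\<forall>z. \<alpha>1 (norm z) \<le> V z \<and> V z \<le> \<alpha>2 (norm z)"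
    and A1: "\<forall>z e w. DV z \<bullet> f z (\<gamma> z + e) w
              \<le> - \<alpha>3 (norm z) + \<rho>1 (norm e) + \<rho>2 (norm w)"
    and A2: "lipschitz_on_compacts (\<lambda>(z, v, w). f z v w)" "lipschitz_on_compacts \<gamma>"
            "f 0 0 0 = 0" "\<gamma> 0 = 0"
    and A3: "D \<ge> 0" "\<forall>t\<ge>0. norm (d t) \<le> D"
    and A4_diff: "\<forall>\<tau>\<ge>0. (\<phi> has_vector_derivative d\<phi> \<tau>) (at \<tau> within {0..})"
                 "continuous_on {0..} d\<phi>"
    and A4_const: "\<exists>j0 c. c \<noteq> 0 \<and> (\<forall>\<tau>\<ge>0. \<phi> \<tau> $ j0 = c)"
    and A4_indep: "T > 0" "\<forall>c. (\<forall>\<tau>\<in>{0..T}. c \<bullet> \<phi> \<tau> = 0) \<longrightarrow> c = 0"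
    and sigma: "0 < \<sigma>" "\<sigma> < 1"
    and r: "0 \<le> r" "r < 1"
    and eta_def: "\<eta> = (\<lambda>s. 1 / sqrt (real CARD('m)) * Kinv \<rho>1 (r * (\<sigma> / 2) * \<alpha>3 s))"
    and eps_def: "\<epsilon> = \<alpha>2 (Kinv \<alpha>3 (2 * \<rho>2 D / \<sigma>))"
    \<comment> \<open>plant (Caratheodory solution on [0,oo))\<close>
    and plant: "\<forall>t\<ge>0. ((\<lambda>s. f (x s) (u s) (d s)) has_integral (x t - x 0)) {0..t}"
    \<comment> \<open>event times: t_0 = 0, strictly increasing, value \<infinity> = no further event\<close>
    and t0: "tev 0 = 0"
    and t_incr: "\<forall>k tk. tev k = ereal tk \<longrightarrow> ereal tk < tev (Suc k)"
    and t_inf: "\<forall>k. tev k = \<infinity> \<longrightarrow> tev (Suc k) = \<infinity>"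
    \<comment> \<open>control law\<close>
    and control: "\<forall>k tk s. tev k = ereal tk \<longrightarrow> tk \<le> s \<longrightarrow> ereal s < tev (Suc k) \<longrightarrow>
                    u s = (\<chi> i. (a k $ i) \<bullet> \<phi> (s - tk))"
    \<comment> \<open>model: xh k \<tau> = xhat(t_k + \<tau>)\<close>
    and model: "\<forall>k tk. tev k = ereal tk \<longrightarrow> xh k 0 = x tk \<and>
                  (\<forall>\<tau>\<in>{0..T}. (xh k has_vector_derivative f (xh k \<tau>) (\<gamma> (xh k \<tau>)) 0)
                                  (at \<tau> within {0..T}))"
    \<comment> \<open>coefficient optimisation\<close>
    and coeff: "\<forall>k tk i. tev k = ereal tk \<longrightarrow>
                  \<bar>(a k $ i) \<bullet> \<phi> 0 - \<gamma> (xh k 0) $ i\<bar> \<le> \<eta> (norm (xh k 0)) \<and>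
                  (\<forall>b. \<bar>b \<bullet> \<phi> 0 - \<gamma> (xh k 0) $ i\<bar> \<le> \<eta> (norm (xh k 0)) \<longrightarrow>
                     integral {0..T} (\<lambda>\<tau>. ((a k $ i) \<bullet> \<phi> \<tau> - \<gamma> (xh k \<tau>) $ i)\<^sup>2)
                     \<le> integral {0..T} (\<lambda>\<tau>. (b \<bullet> \<phi> \<tau> - \<gamma> (xh k \<tau>) $ i)\<^sup>2))"
    \<comment> \<open>event-triggering rule (e evaluated with the control of the current interval)\<close>
    and trigger: "\<forall>k tk. tev k = ereal tk \<longrightarrow>
         (\<forall>s. tk < s \<and> ereal s < tev (Suc k) \<longrightarrow>
            \<not> (\<rho>1 (norm ((\<chi> i. (a k $ i) \<bullet> \<phi> (s - tk)) - \<gamma> (x s))) \<ge> \<sigma> / 2 * \<alpha>3 (norm (x s))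
               \<and> V (x s) \<ge> \<epsilon>)) \<and>
         (\<forall>s. tev (Suc k) = ereal s \<longrightarrow>
            \<rho>1 (norm ((\<chi> i. (a k $ i) \<bullet> \<phi> (s - tk)) - \<gamma> (x s))) \<ge> \<sigma> / 2 * \<alpha>3 (norm (x s))
               \<and> V (x s) \<ge> \<epsilon>)"
  shows "\<exists>\<beta>1>0. \<exists>\<beta>2>0. \<forall>k tk t. tev k = ereal tk \<longrightarrow> tk \<le> t \<longrightarrow>
           ereal t < min (tev (Suc k)) (ereal (tk + T)) \<longrightarrow>
           norm (u t) \<le> \<beta>1 \<and>
           (\<forall>w. (u has_vector_derivative w) (at t within {s. tk \<le> s \<and> ereal s < tev (Suc k)})
                  \<longrightarrow> norm w \<le> \<beta>2)"
proof -
  have cphi: "continuous_on {0..} \<phi>"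
    unfolding continuous_on_eq_continuous_within
  proof
    fix \<tau> :: real assume "\<tau> \<in> {0..}"
    thus "continuous (at \<tau> within {0..}) \<phi>"
      using A4_diff(1) by (intro has_vector_derivative_continuous) auto
  qed
  have cphiT: "continuous_on {0..T} \<phi>" by (rule continuous_on_subset[OF cphi]) auto
  have "bounded (\<phi> ` {0..T})" by (intro compact_imp_bounded compact_continuous_image cphiT compact_Icc)
  then obtain \<Phi>0 where \<Phi>0: "\<forall>\<tau>\<in>{0..T}. norm (\<phi> \<tau>) \<le> \<Phi>0" by (auto simp: bounded_iff)
  define \<Phi> where "\<Phi> = max \<Phi>0 0"
  have \<Phi>: "\<Phi> \<ge> 0" "\<And>\<tau>. \<tau> \<in> {0..T} \<Longrightarrow> norm (\<phi> \<tau>) \<le> \<Phi>" using \<Phi>0 by (auto simp: \<Phi>_def le_max_iff_disj)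
  have cdphiT: "continuous_on {0..T} d\<phi>" by (rule continuous_on_subset[OF A4_diff(2)]) auto
  have "bounded (d\<phi> ` {0..T})" by (intro compact_imp_bounded compact_continuous_image cdphiT compact_Icc)
  then obtain d\<Phi>0 where d\<Phi>0: "\<forall>\<tau>\<in>{0..T}. norm (d\<phi> \<tau>) \<le> d\<Phi>0" by (auto simp: bounded_iff)
  define d\<Phi> where "d\<Phi> = max d\<Phi>0 0"
  have d\<Phi>: "d\<Phi> \<ge> 0" "\<And>\<tau>. \<tau> \<in> {0..T} \<Longrightarrow> norm (d\<phi> \<tau>) \<le> d\<Phi>" using d\<Phi>0 by (auto simp: d\<Phi>_def le_max_iff_disj)

  have tnn: "tev j \<ge> 0" for j
  proof (induction j)
    case 0 thus ?case by (simp add: t0)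
  next
    case (Suc j)
    show ?case
    proof (cases "tev j")
      case (real tj)
      hence "ereal tj < tev (Suc j)" using t_incr by blast
      moreover have "0 \<le> ereal tj" using Suc real by simp
      ultimately show ?thesis by (intro order.trans[of 0 "ereal tj" "tev (Suc j)"]) (auto intro: less_imp_le)
    next
      case PInf thus ?thesis using t_inf by simp
    next
      case MInf thus ?thesis using Suc by simp
    qed
  qed
  have tstep: "tev j \<le> tev (Suc j)" for j
  proof (cases "tev j")
    case (real tj) thus ?thesis using t_incr by (metis less_imp_le)
  next
    case PInf thus ?thesis using t_inf by simp
  next
    case MInf thus ?thesis using tnn[of j] by simp
  qed
  have tmono: "j \<le> k \<Longrightarrow> tev j \<le> tev k" for j k
    by (rule lift_Suc_mono_le[of tev, OF tstep])
  have tfin: "\<exists>tj. tev j = ereal tj \<and> 0 \<le> tj \<and> tj \<le> tk" if "tev k = ereal tk" "j \<le> k" for j k tk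
  proof -
    have le: "tev j \<le> ereal tk" using tmono[OF that(2)] that(1) by simp
    show ?thesis
    proof (cases "tev j")
      case (real tj) thus ?thesis using le tnn[of j] by auto
    next
      case PInf thus ?thesis using le by simp
    next
      case MInf thus ?thesis using tnn[of j] by simp
    qed
  qed

  define G where "G = (\<lambda>s. f (x s) (u s) (d s))"
  have Gint: "(G has_integral (x t - x 0)) {0..t}" if "0 \<le> t" for t
    using plant that by (simp add: G_def)
  have cx: "continuous_on {0..b} x" if b: "0 \<le> b" for b
  proof -
    have "continuous_on {0..b} (\<lambda>t. integral {0..t} G)"
      by (rule indefinite_integral_continuous_1) (use Gint[OF b] in blast)
    hence "continuous_on {0..b} (\<lambda>t. x 0 + integral {0..t} G)" by (intro continuous_intros)
    moreover have "x 0 + integral {0..t} G = x t" if "t \<in> {0..b}" for t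
      using integral_unique[OF Gint[of t]] that by simp
    ultimately show ?thesis by (rule continuous_on_eq)
  qed
  have incr: "(G has_integral (x (s + h) - x s)) {s..s+h}" if "0 \<le> s" "0 \<le> h" for s h
  proof -
    have i1: "G integrable_on {s..s+h}"
      by (rule integrable_subinterval_real[OF has_integral_integrable[OF Gint[of "s+h"]]]) (use that in auto)
    have "(G has_integral ((x s - x 0) + integral {s..s+h} G)) {0..s+h}"
      by (rule has_integral_combine[OF _ _ Gint[of s] integrable_integral[OF i1]]) (use that in auto)
    from has_integral_unique[OF this Gint[of "s+h"]] that
    have "(x s - x 0) + integral {s..s+h} G = x (s + h) - x 0" by simp
    hence "integral {s..s+h} G = x (s + h) - x s" by (simp add: algebra_simps)
    with integrable_integral[OF i1] show ?thesis by simp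
  qed
  have cV: "continuous_on UNIV V"
    using V_C1(1) has_derivative_continuous continuous_at_imp_continuous_on by blast

  have \<rho>2D: "\<rho>2 D \<ge> 0" using K_nonneg[OF K(5) A3(1)] .
  define \<kappa> where "\<kappa> = Kinv \<alpha>3 (2 * \<rho>2 D / \<sigma>)"
  have \<kappa>: "\<kappa> \<ge> 0" "\<alpha>3 \<kappa> = 2 * \<rho>2 D / \<sigma>"
    using Kinv[OF K(3), of "2 * \<rho>2 D / \<sigma>"] \<rho>2D sigma by (auto simp: \<kappa>_def)
  have bigV: "\<rho>2 D \<le> \<sigma> / 2 * \<alpha>3 (norm z)" if Vz: "V z \<ge> \<epsilon>" for z
  proof -
    have "\<alpha>2 \<kappa> \<le> \<alpha>2 (norm z)" using Vz V_bounds by (auto simp: eps_def \<kappa>_def intro: order_trans)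
    hence "\<kappa> \<le> norm z" using K_le_rev[OF K(2) \<kappa>(1)] by simp
    hence "\<alpha>3 \<kappa> \<le> \<alpha>3 (norm z)" using K_mono[OF K(3) \<kappa>(1)] by simp
    hence "2 * \<rho>2 D / \<sigma> \<le> \<alpha>3 (norm z)" using \<kappa> by simp
    thus ?thesis using sigma by (simp add: field_simps)
  qed

  have ebound: "\<rho>1 (norm ((\<chi> i. (a j $ i) \<bullet> \<phi> 0) - \<gamma> (x tj))) \<le> \<sigma> / 2 * \<alpha>3 (norm (x tj))"
    if tj: "tev j = ereal tj" for j tj
  proof -
    define z where "z = x tj"
    define e where "e = (\<chi> i. (a j $ i) \<bullet> \<phi> 0) - \<gamma> z"
    define \<eta>0 where "\<eta>0 = \<eta> (norm z)"
    have xh0: "xh j 0 = z" using model tj by (simp add: z_def)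
    have ei: "\<bar>e $ i\<bar> \<le> \<eta>0" for i
      using coeff tj xh0 by (auto simp: e_def \<eta>0_def)
    obtain i0 :: 'm where True by blast
    have \<eta>0: "\<eta>0 \<ge> 0" using ei[of i0] by linarith
    have "(\<Sum>i\<in>UNIV. (norm (e $ i))\<^sup>2) \<le> (\<Sum>i\<in>(UNIV::'m set). \<eta>0\<^sup>2)"
      by (intro sum_mono) (use ei \<eta>0 in \<open>auto simp: abs_le_square_iff[symmetric]\<close>)
    hence "norm e \<le> sqrt (real CARD('m) * \<eta>0\<^sup>2)"
      unfolding norm_vec_def L2_set_def by (intro real_sqrt_le_mono) simp
    also have "\<dots> = sqrt (real CARD('m)) * \<eta>0" using \<eta>0 by (simp add: real_sqrt_mult)
    also have "\<dots> = Kinv \<rho>1 (r * (\<sigma> / 2) * \<alpha>3 (norm z))"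
      by (simp add: \<eta>0_def eta_def)
    finally have ne: "norm e \<le> Kinv \<rho>1 (r * (\<sigma> / 2) * \<alpha>3 (norm z))" .
    have Y: "r * (\<sigma> / 2) * \<alpha>3 (norm z) \<ge> 0" using r sigma K_nonneg[OF K(3), of "norm z"] by simp
    have "\<rho>1 (norm e) \<le> \<rho>1 (Kinv \<rho>1 (r * (\<sigma> / 2) * \<alpha>3 (norm z)))"
      by (rule K_mono[OF K(4) _ ne]) simp
    also have "\<dots> = r * (\<sigma> / 2) * \<alpha>3 (norm z)" using Kinv[OF K(4) Y] by simp
    also have "\<dots> \<le> \<sigma> / 2 * \<alpha>3 (norm z)"
      using r sigma K_nonneg[OF K(3), of "norm z"] by (simp add: mult_le_cancel_right1 mult_left_le_one_le)
    finally show ?thesis by (simp add: e_def z_def)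
  qed
  define Eb where "Eb = max \<epsilon> (V (x 0))"
  have inv: "V (x tk) \<le> Eb" if tk: "tev k = ereal tk" for k tk
  proof -
    have tk0: "0 \<le> tk" using tnn[of k] tk by simp
    have cg: "continuous_on {0..tk} (\<lambda>t. V (x t))"
      by (rule continuous_on_compose2[OF cV cx[OF tk0]]) auto
    have "\<forall>t\<in>{0..tk}. V (x t) \<le> max \<epsilon> (V (x 0))"
    proof (rule dini_bound[OF tk0 cg])
      fix s \<delta> :: real assume s: "s \<in> {0..<tk}" and Vs: "\<epsilon> \<le> V (x s)" and \<delta>: "\<delta> > 0"
      define tt where "tt = (\<lambda>j. real_of_ereal (tev j))"
      have ttj: "j \<le> k \<Longrightarrow> tev j = ereal (tt j)" for j
        using tfin[OF tk, of j] by (auto simp: tt_def)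
      define J where "J = {j. j \<le> k \<and> tt j \<le> s}"
      have finJ: "finite J" by (simp add: J_def)
      have J0: "0 \<in> J" using s by (simp add: J_def tt_def t0)
      define j where "j = Max J"
      have jJ: "j \<in> J" using finJ J0 unfolding j_def by (intro Max_in) auto
      have jk: "j < k"
      proof -
        have "j \<le> k" using jJ by (simp add: J_def)
        moreover have "j \<noteq> k" using jJ s ttj[of k] tk by (auto simp: J_def)
        ultimately show ?thesis by simp
      qed
      have sj1: "s < tt (Suc j)"
      proof (rule ccontr)
        assume "\<not> s < tt (Suc j)"
        hence "Suc j \<in> J" using jk by (auto simp: J_def)
        hence "Suc j \<le> j" using finJ unfolding j_def by (rule Max_ge[rotated])
        thus False by simp
      qed
      define tj where "tj = tt j"
      define tj1 where "tj1 = tt (Suc j)"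
      have j: "tev j = ereal tj" "tev (Suc j) = ereal tj1" "tj \<le> s" "s < tj1"
        using ttj[of j] ttj[of "Suc j"] jk jJ sj1 by (auto simp: tj_def tj1_def J_def)
      define U where "U = (\<lambda>\<tau>. \<chi> i. (a j $ i) \<bullet> \<phi> (\<tau> - tj))"
      define h1 where "h1 = (tj1 - s) / 2"
      have h1: "h1 > 0" using j by (simp add: h1_def)
      have s0: "0 \<le> s" using s by simp
      have onint: "u \<tau> = U \<tau>" if "\<tau> \<in> {s..s+h1}" for \<tau>
      proof -
        have "tj \<le> \<tau>" "\<tau> < tj1" using that j h1 by (auto simp: h1_def field_simps)
        thus ?thesis using control j by (simp add: U_def)
      qed
      have cU: "continuous_on {s..s+h1} U"
        unfolding U_def
        by (intro continuous_intros continuous_on_compose2[OF cphi]) (use j in auto)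
      have cxs: "continuous_on {s..s+h1} x"
        by (rule continuous_on_subset[OF cx[of "s+h1"]]) (use s0 h1 in auto)
      have intg: "((\<lambda>\<tau>. f (x \<tau>) (U \<tau>) (d \<tau>)) has_integral (x (s + h) - x s)) {s..s+h}"
        if "0 \<le> h" "h \<le> h1" for h
        by (rule has_integral_eq[OF _ incr[OF s0 that(1)]]) (use onint that in \<open>auto simp: G_def\<close>)
      define K0 where "K0 = - \<alpha>3 (norm (x s)) + \<rho>1 (norm (U s - \<gamma> (x s))) + \<rho>2 D"
      have Kb: "DV (x s) \<bullet> f (x s) (U s) w \<le> K0" if "norm w \<le> D" for w
      proof -
        have "DV (x s) \<bullet> f (x s) (\<gamma> (x s) + (U s - \<gamma> (x s))) w
              \<le> - \<alpha>3 (norm (x s)) + \<rho>1 (norm (U s - \<gamma> (x s))) + \<rho>2 (norm w)" using A1 by blast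
        moreover have "\<rho>2 (norm w) \<le> \<rho>2 D" using K_mono[OF K(5) _ that] by simp
        ultimately show ?thesis by (simp add: K0_def)
      qed
      have e1: "\<rho>1 (norm (U s - \<gamma> (x s))) \<le> \<sigma> / 2 * \<alpha>3 (norm (x s))"
      proof (cases "s = tj")
        case True thus ?thesis using ebound[OF j(1)] by (simp add: U_def)
      next
        case False
        hence "tj < s" using j by simp
        hence "\<not> (\<rho>1 (norm ((\<chi> i. (a j $ i) \<bullet> \<phi> (s - tj)) - \<gamma> (x s))) \<ge> \<sigma> / 2 * \<alpha>3 (norm (x s))
               \<and> V (x s) \<ge> \<epsilon>)" using trigger j by simp
        thus ?thesis using Vs by (simp add: U_def)
      qed
      have K0: "K0 \<le> 0"
        using e1 bigV[OF Vs] K_nonneg[OF K(3), of "norm (x s)"] sigma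
        by (simp add: K0_def) (smt (verit) mult_left_le_one_le mult_nonneg_nonneg)
      have ex: "\<exists>h0>0. \<forall>h. 0 < h \<and> h \<le> h0 \<longrightarrow> V (x (s + h)) \<le> V (x s) + (K0 + \<delta>) * h"
        by (rule dini_step[where x=x and s=s and U=U and V=V and DV=DV and f=f and d=d, OF V_C1(1)[rule_format, of "x s"] A2(1) s0 h1 cxs cU intg A3(2) Kb \<delta>])
      then obtain h0 where h0: "h0 > 0" "\<forall>h. 0 < h \<and> h \<le> h0 \<longrightarrow> V (x (s + h)) \<le> V (x s) + (K0 + \<delta>) * h"
        by blast
      show "\<exists>h0>0. \<forall>h. 0 < h \<and> h \<le> h0 \<longrightarrow> V (x (s + h)) \<le> V (x s) + \<delta> * h"
      proof (intro exI[of _ h0] conjI allI impI h0(1))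
        fix h assume h: "0 < h \<and> h \<le> h0"
        have "(K0 + \<delta>) * h \<le> \<delta> * h" using K0 h by (simp add: mult_right_mono)
        moreover have "V (x (s + h)) \<le> V (x s) + (K0 + \<delta>) * h" using h0(2) h by blast
        ultimately show "V (x (s + h)) \<le> V (x s) + \<delta> * h" by linarith
      qed
    qed
    thus ?thesis using tk0 by (auto simp: Eb_def)
  qed
  have \<rho>10: "\<rho>1 0 = 0" and \<rho>20: "\<rho>2 0 = 0" using K(4,5) by (auto simp: classKinf_def)
  have mder: "(xh k has_vector_derivative f (xh k \<tau>) (\<gamma> (xh k \<tau>)) 0) (at \<tau> within {0..T})"
    if tk: "tev k = ereal tk" and \<tau>: "\<tau> \<in> {0..T}" for k tk \<tau>
    using model tk \<tau> by blast
  have cxh: "continuous_on {0..T} (xh k)" if tk: "tev k = ereal tk" for k tk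
    by (rule has_derivative_continuous_on)
       (use mder[OF tk] in \<open>auto simp: has_vector_derivative_def\<close>)
  have mdec: "V (xh k \<tau>) \<le> V (x tk)" if tk: "tev k = ereal tk" and \<tau>: "\<tau> \<in> {0..T}" for k tk \<tau>
  proof -
    have "\<forall>\<tau>\<in>{0..T}. V (xh k \<tau>) \<le> V (xh k 0)"
    proof (rule deriv_nonpos_dec[where g' = "\<lambda>\<tau>. DV (xh k \<tau>) \<bullet> f (xh k \<tau>) (\<gamma> (xh k \<tau>)) 0"])
      show "0 \<le> T" using A4_indep(1) by simp
    next
      fix \<tau> assume \<tau>: "\<tau> \<in> {0..T}"
      have "((\<lambda>\<tau>. V (xh k \<tau>)) has_derivative
             (\<lambda>h. DV (xh k \<tau>) \<bullet> (h *\<^sub>R f (xh k \<tau>) (\<gamma> (xh k \<tau>)) 0))) (at \<tau> within {0..T})"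
        by (rule has_derivative_compose[OF mder[OF tk \<tau>, unfolded has_vector_derivative_def]
              V_C1(1)[rule_format]])
      thus "((\<lambda>\<tau>. V (xh k \<tau>)) has_derivative
             (\<lambda>h. h * (DV (xh k \<tau>) \<bullet> f (xh k \<tau>) (\<gamma> (xh k \<tau>)) 0))) (at \<tau> within {0..T})"
        by (simp add: inner_scaleR_right)
      have "DV (xh k \<tau>) \<bullet> f (xh k \<tau>) (\<gamma> (xh k \<tau>) + 0) 0
            \<le> - \<alpha>3 (norm (xh k \<tau>)) + \<rho>1 (norm (0::real^'m)) + \<rho>2 (norm (0::real^'q))"
        using A1 by blast
      thus "DV (xh k \<tau>) \<bullet> f (xh k \<tau>) (\<gamma> (xh k \<tau>)) 0 \<le> 0"
        using \<rho>10 \<rho>20 K_nonneg[OF K(3), of "norm (xh k \<tau>)"] by simp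
    qed
    moreover have "xh k 0 = x tk" using model tk by blast
    ultimately show ?thesis using \<tau> by simp
  qed
  obtain R where R: "R \<ge> 0" "\<alpha>1 R > Eb" using K_big[OF K(1)] by blast
  have xhR: "norm (xh k \<tau>) \<le> R" if tk: "tev k = ereal tk" and \<tau>: "\<tau> \<in> {0..T}" for k tk \<tau>
  proof (rule ccontr)
    assume "\<not> norm (xh k \<tau>) \<le> R"
    hence "\<alpha>1 R \<le> \<alpha>1 (norm (xh k \<tau>))" using K_mono[OF K(1) R(1)] by simp
    also have "\<dots> \<le> V (xh k \<tau>)" using V_bounds[rule_format, of "xh k \<tau>"] by simp
    also have "\<dots> \<le> Eb" using mdec[OF tk \<tau>] inv[OF tk] by simp
    finally show False using R(2) by simp
  qed
  have c\<gamma>: "continuous_on UNIV \<gamma>"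
  proof -
    have "isCont \<gamma> z" for z
    proof -
      obtain L where "L-lipschitz_on (cball z 1) \<gamma>" using A2(2) compact_cball[of z 1] unfolding lipschitz_on_compacts_def by blast
      hence "continuous_on (cball z 1) \<gamma>" by (rule lipschitz_on_continuous_on)
      thus ?thesis by (rule continuous_on_interior) simp
    qed
    thus ?thesis by (simp add: continuous_at_imp_continuous_on)
  qed
  have "bounded (\<gamma> ` cball 0 R)"
    by (intro compact_imp_bounded compact_continuous_image continuous_on_subset[OF c\<gamma>] compact_cball) auto
  then obtain Gm0 where Gm0: "\<forall>z\<in>cball 0 R. norm (\<gamma> z) \<le> Gm0" by (auto simp: bounded_iff)
  define Gm where "Gm = max Gm0 0"
  have Gm: "Gm \<ge> 0" "\<And>z. norm z \<le> R \<Longrightarrow> norm (\<gamma> z) \<le> Gm"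
    using Gm0 by (auto simp: Gm_def le_max_iff_disj)
  obtain j0 c where jc: "c \<noteq> 0" "\<forall>\<tau>\<ge>0. \<phi> \<tau> $ j0 = c" using A4_const by blast
  obtain \<mu> where \<mu>: "\<mu> > 0" "\<forall>c. \<mu> * (norm c)^2 \<le> integral {0..T} (\<lambda>\<tau>. (c \<bullet> \<phi> \<tau>)^2)"
    using quad_lower[OF A4_indep(1) cphiT A4_indep(2)] by blast
  define Am where "Am = sqrt (10 * T * Gm^2 / \<mu>)"
  have Am0: "Am \<ge> 0" unfolding Am_def using \<mu> A4_indep(1) by simp
  have abound: "norm (a k $ i) \<le> Am" if tk: "tev k = ereal tk" for k tk i
  proof -
    define gi where "gi = (\<lambda>\<tau>. \<gamma> (xh k \<tau>) $ i)"
    have cgi: "continuous_on {0..T} gi" unfolding gi_def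
      by (intro continuous_intros continuous_on_compose2[OF c\<gamma> cxh[OF tk]]) auto
    have gib: "\<bar>gi \<tau>\<bar> \<le> Gm" if "\<tau> \<in> {0..T}" for \<tau>
      using component_le_norm_cart[of "\<gamma> (xh k \<tau>)" i] Gm(2)[OF xhR[OF tk that]] by (simp add: gi_def)
    define b where "b = (gi 0 / c) *\<^sub>R axis j0 (1::real)"
    have b\<phi>: "b \<bullet> \<phi> \<tau> = gi 0" if "\<tau> \<ge> 0" for \<tau>
      using jc that by (simp add: b_def inner_axis')
    have coK: "\<bar>(a k $ i) \<bullet> \<phi> 0 - \<gamma> (xh k 0) $ i\<bar> \<le> \<eta> (norm (xh k 0)) \<and>
                  (\<forall>b. \<bar>b \<bullet> \<phi> 0 - \<gamma> (xh k 0) $ i\<bar> \<le> \<eta> (norm (xh k 0)) \<longrightarrow>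
                     integral {0..T} (\<lambda>\<tau>. ((a k $ i) \<bullet> \<phi> \<tau> - \<gamma> (xh k \<tau>) $ i)\<^sup>2)
                     \<le> integral {0..T} (\<lambda>\<tau>. (b \<bullet> \<phi> \<tau> - \<gamma> (xh k \<tau>) $ i)\<^sup>2))"
      using coeff tk by blast
    have co: "\<bar>(a k $ i) \<bullet> \<phi> 0 - \<gamma> (xh k 0) $ i\<bar> \<le> \<eta> (norm (xh k 0))"
      using coK by blast
    have "\<bar>b \<bullet> \<phi> 0 - \<gamma> (xh k 0) $ i\<bar> \<le> \<eta> (norm (xh k 0))"
      using b\<phi>[of 0] co by (simp add: gi_def)
    with coK have cost: "integral {0..T} (\<lambda>\<tau>. ((a k $ i) \<bullet> \<phi> \<tau> - gi \<tau>)\<^sup>2)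
                 \<le> integral {0..T} (\<lambda>\<tau>. (b \<bullet> \<phi> \<tau> - gi \<tau>)\<^sup>2)"
      unfolding gi_def by blast
    have ia: "(\<lambda>\<tau>. ((a k $ i) \<bullet> \<phi> \<tau> - gi \<tau>)\<^sup>2) integrable_on {0..T}"
      by (intro integrable_continuous_interval continuous_intros cphiT cgi)
    have ib: "(\<lambda>\<tau>. (b \<bullet> \<phi> \<tau> - gi \<tau>)\<^sup>2) integrable_on {0..T}"
      by (intro integrable_continuous_interval continuous_intros cphiT cgi)
    have ig: "(\<lambda>\<tau>. (gi \<tau>)\<^sup>2) integrable_on {0..T}"
      by (intro integrable_continuous_interval continuous_intros cgi)
    have iphi: "(\<lambda>\<tau>. ((a k $ i) \<bullet> \<phi> \<tau>)\<^sup>2) integrable_on {0..T}"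
      by (intro integrable_continuous_interval continuous_intros cphiT)
    have costb: "integral {0..T} (\<lambda>\<tau>. (b \<bullet> \<phi> \<tau> - gi \<tau>)\<^sup>2) \<le> integral {0..T} (\<lambda>\<tau>. 4 * Gm^2)"
    proof (rule integral_le[OF ib])
      fix \<tau> assume \<tau>: "\<tau> \<in> {0..T}"
      have "\<bar>b \<bullet> \<phi> \<tau> - gi \<tau>\<bar> \<le> \<bar>2 * Gm\<bar>"
        using b\<phi>[of \<tau>] gib[OF \<tau>] gib[of 0] \<tau> A4_indep(1) Gm(1) by auto
      hence "(b \<bullet> \<phi> \<tau> - gi \<tau>)\<^sup>2 \<le> (2 * Gm)\<^sup>2" by (simp only: abs_le_square_iff)
      thus "(b \<bullet> \<phi> \<tau> - gi \<tau>)\<^sup>2 \<le> 4 * Gm^2" by (simp add: power_mult_distrib)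
    qed (rule integrable_const_ivl)
    have costg: "integral {0..T} (\<lambda>\<tau>. (gi \<tau>)\<^sup>2) \<le> integral {0..T} (\<lambda>\<tau>. Gm^2)"
    proof (rule integral_le[OF ig])
      fix \<tau> assume \<tau>: "\<tau> \<in> {0..T}"
      have "\<bar>gi \<tau>\<bar> \<le> \<bar>Gm\<bar>" using gib[OF \<tau>] Gm(1) by simp
      thus "(gi \<tau>)\<^sup>2 \<le> Gm^2" by (simp only: abs_le_square_iff)
    qed (rule integrable_const_ivl)
    have "integral {0..T} (\<lambda>\<tau>. ((a k $ i) \<bullet> \<phi> \<tau>)\<^sup>2)
          \<le> integral {0..T} (\<lambda>\<tau>. 2 * ((a k $ i) \<bullet> \<phi> \<tau> - gi \<tau>)\<^sup>2 + 2 * (gi \<tau>)\<^sup>2)"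
    proof (rule integral_le[OF iphi])
      show "(\<lambda>\<tau>. 2 * ((a k $ i) \<bullet> \<phi> \<tau> - gi \<tau>)\<^sup>2 + 2 * (gi \<tau>)\<^sup>2) integrable_on {0..T}"
        by (intro integrable_continuous_interval continuous_intros cphiT cgi)
      fix \<tau>
      have "0 \<le> ((a k $ i) \<bullet> \<phi> \<tau> - 2 * gi \<tau>)\<^sup>2" by simp
      thus "((a k $ i) \<bullet> \<phi> \<tau>)\<^sup>2 \<le> 2 * ((a k $ i) \<bullet> \<phi> \<tau> - gi \<tau>)\<^sup>2 + 2 * (gi \<tau>)\<^sup>2"
        by (simp add: power2_eq_square algebra_simps)
    qed
    also have "\<dots> = 2 * integral {0..T} (\<lambda>\<tau>. ((a k $ i) \<bullet> \<phi> \<tau> - gi \<tau>)\<^sup>2)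
                    + 2 * integral {0..T} (\<lambda>\<tau>. (gi \<tau>)\<^sup>2)"
    proof -
      have i2a: "(\<lambda>\<tau>. 2 * ((a k $ i) \<bullet> \<phi> \<tau> - gi \<tau>)\<^sup>2) integrable_on {0..T}"
        by (intro integrable_continuous_interval continuous_intros cphiT cgi)
      have i2g: "(\<lambda>\<tau>. 2 * (gi \<tau>)\<^sup>2) integrable_on {0..T}"
        by (intro integrable_continuous_interval continuous_intros cgi)
      show ?thesis
        by (simp add: integral_add[OF i2a i2g] integral_mult[OF ia, symmetric] integral_mult[OF ig, symmetric])
    qed
    also have "\<dots> \<le> 2 * (4 * Gm^2 * T) + 2 * (Gm^2 * T)"
      using cost costb costg A4_indep(1) by simp
    finally have "\<mu> * (norm (a k $ i))^2 \<le> 10 * T * Gm^2"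
      using \<mu>(2)[rule_format, of "a k $ i"] by simp
    hence "(norm (a k $ i))^2 \<le> 10 * T * Gm^2 / \<mu>" using \<mu>(1) by (simp add: field_simps)
    thus ?thesis unfolding Am_def by (rule real_le_rsqrt)
  qed
  have lin: "norm (\<chi> i. (a k $ i) \<bullet> v) \<le> real CARD('m) * Am * norm v" if tk: "tev k = ereal tk" for k tk v
  proof -
    have "norm (\<chi> i. (a k $ i) \<bullet> v) \<le> (\<Sum>i\<in>UNIV. \<bar>(\<chi> i. (a k $ i) \<bullet> v) $ i\<bar>)"
      by (rule norm_le_l1_cart)
    also have "\<dots> \<le> (\<Sum>i\<in>(UNIV::'m set). Am * norm v)"
    proof (rule sum_mono)
      fix i :: 'm
      have "\<bar>(a k $ i) \<bullet> v\<bar> \<le> norm (a k $ i) * norm v" by (rule Cauchy_Schwarz_ineq2)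
      also have "\<dots> \<le> Am * norm v" using abound[OF tk, of i] by (simp add: mult_right_mono)
      finally show "\<bar>(\<chi> i. (a k $ i) \<bullet> v) $ i\<bar> \<le> Am * norm v" by simp
    qed
    also have "\<dots> = real CARD('m) * Am * norm v" by simp
    finally show ?thesis .
  qed
  define \<beta>1 where "\<beta>1 = real CARD('m) * Am * \<Phi> + 1"
  define \<beta>2 where "\<beta>2 = real CARD('m) * Am * d\<Phi> + 1"
  have b1: "\<beta>1 > 0" using Am0 \<Phi>(1) by (simp add: \<beta>1_def add_nonneg_pos)
  have b2: "\<beta>2 > 0" using Am0 d\<Phi>(1) by (simp add: \<beta>2_def add_nonneg_pos)
  show ?thesis
  proof (rule exI[of _ \<beta>1], rule conjI[OF b1], rule exI[of _ \<beta>2], rule conjI[OF b2], intro allI impI conjI)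
    fix k tk t
    assume tk: "tev k = ereal tk" and t1: "tk \<le> t" and t2: "ereal t < min (tev (Suc k)) (ereal (tk + T))"
    have t3: "ereal t < tev (Suc k)" and t4: "t < tk + T" using t2 by auto
    define \<tau> where "\<tau> = t - tk"
    have \<tau>: "\<tau> \<in> {0..T}" using t1 t4 by (simp add: \<tau>_def)
    have ut: "u t = (\<chi> i. (a k $ i) \<bullet> \<phi> \<tau>)" using control tk t1 t3 by (simp add: \<tau>_def)
    have "norm (u t) \<le> real CARD('m) * Am * norm (\<phi> \<tau>)" using lin[OF tk] ut by simp
    also have "\<dots> \<le> real CARD('m) * Am * \<Phi>" using \<Phi>(2)[OF \<tau>] Am0 by (simp add: mult_left_mono)
    finally show "norm (u t) \<le> \<beta>1" by (simp add: \<beta>1_def)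
  next
    fix k tk t w
    assume tk: "tev k = ereal tk" and t1: "tk \<le> t" and t2: "ereal t < min (tev (Suc k)) (ereal (tk + T))"
      and w: "(u has_vector_derivative w) (at t within {s. tk \<le> s \<and> ereal s < tev (Suc k)})"
    have t3: "ereal t < tev (Suc k)" and t4: "t < tk + T" using t2 by auto
    define \<tau> where "\<tau> = t - tk"
    have \<tau>: "\<tau> \<in> {0..T}" using t1 t4 by (simp add: \<tau>_def)
    define S where "S = {s. tk \<le> s \<and> ereal s < tev (Suc k)}"
    have tS: "t \<in> S" using t1 t3 by (simp add: S_def)
    have mv: "(a k) *v v = (\<chi> i. (a k $ i) \<bullet> v)" for v :: "real^'p"
      by (simp add: matrix_vector_mult_def inner_vec_def vec_eq_iff)
    have d1: "((\<lambda>s. s - tk) has_vector_derivative 1) (at t within S)"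
      by (simp add: has_vector_derivative_diff_const)
    have sub: "(\<lambda>s. s - tk) ` S \<subseteq> {0..}" by (auto simp: S_def)
    have d2: "(\<phi> has_vector_derivative d\<phi> \<tau>) (at ((\<lambda>s. s - tk) t) within (\<lambda>s. s - tk) ` S)"
      using has_vector_derivative_within_subset[OF A4_diff(1)[rule_format, of \<tau>] sub] \<tau>
      by (simp add: \<tau>_def)
    have d3: "((\<phi> \<circ> (\<lambda>s. s - tk)) has_vector_derivative (1::real) *\<^sub>R d\<phi> \<tau>) (at t within S)"
      by (rule vector_diff_chain_within[OF d1 d2])
    have d4: "((\<lambda>s. (a k) *v (\<phi> \<circ> (\<lambda>s. s - tk)) s) has_vector_derivative (a k) *v ((1::real) *\<^sub>R d\<phi> \<tau>))
               (at t within S)"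
      by (rule bounded_linear.has_vector_derivative[OF matrix_vector_mul_bounded_linear d3])
    have d5: "(u has_vector_derivative (a k) *v d\<phi> \<tau>) (at t within S)"
    proof (rule has_vector_derivative_transform[OF tS _ ])
      show "((\<lambda>s. (a k) *v (\<phi> \<circ> (\<lambda>s. s - tk)) s) has_vector_derivative (a k) *v d\<phi> \<tau>) (at t within S)"
        using d4 by simp
      fix s assume "s \<in> S"
      thus "u s = (a k) *v (\<phi> \<circ> (\<lambda>s. s - tk)) s" using control tk by (simp add: S_def mv)
    qed
    have nb: "at t within S \<noteq> bot"
    proof -
      obtain t' where t': "t < t'" "{t..t'} \<subseteq> S"
      proof (cases "tev (Suc k)")
        case (real v)
        hence "t < v" using t3 by simp
        have "{t..(t + v) / 2} \<subseteq> S" using \<open>t < v\<close> real t1 by (auto simp: S_def field_simps)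
        moreover have "t < (t + v) / 2" using \<open>t < v\<close> by (simp add: field_simps)
        ultimately show ?thesis using that by blast
      next
        case PInf
        have "{t..t + 1} \<subseteq> S" using PInf t1 by (auto simp: S_def)
        moreover have "t < t + 1" by simp
        ultimately show ?thesis using that by blast
      next
        case MInf thus ?thesis using t3 by simp
      qed
      have "at_right t = at t within {t..t'}" using at_within_Icc_at_right[OF t'(1)] by simp
      also have "\<dots> \<le> at t within S" by (rule at_le[OF t'(2)])
      finally have le: "at_right t \<le> at t within S" .
      show ?thesis
      proof
        assume "at t within S = bot"
        with le have "at_right t = bot" by (simp add: bot_unique)
        thus False using trivial_limit_at_right_real[of t] by simp
      qed
    qed
    have "w = (a k) *v d\<phi> \<tau>"
      by (rule vector_derivative_unique_within[OF nb w[folded S_def] d5])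
    hence "norm w \<le> real CARD('m) * Am * norm (d\<phi> \<tau>)" using lin[OF tk] mv by simp
    also have "\<dots> \<le> real CARD('m) * Am * d\<Phi>" using d\<Phi>(2)[OF \<tau>] Am0 by (simp add: mult_left_mono)
    finally show "norm w \<le> \<beta>2" by (simp add: \<beta>2_def)
  qed
qed

end
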